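(* Let $\mathcal G=\mathcal G_4$ and consider the edge reinforced random walk on $\mathcal G_4$ with weight function $W:\mathbb N\to(0,\infty)$ satisfying $\sum_{k\in\mathbb N}\frac1{W(k)}<\infty$, arbitrary initial edge weights $X_0^e\in\mathbb N$ and arbitrary starting vertex. Then $\mathbb P(\text{all four edges of }\mathcal G_4\text{ are traversed infinitely often})=0.$
   Context: $\mathbb N=\{0,1,2,\ldots\}$. For $l\ge 3$, the cycle $\mathcal G_l$ has vertices $\{0,1,\ldots,l-1\}$ and edges $e_i=\{i,i+1\}$, $i=0,\ldots,l-1$, with addition modulo $l$. Edge reinforced random walk (ERRW) on a connected graph $\mathcal G$ of bounded degree: given a weight function $W:\mathbb N\to(0,\infty)$, initial edge weights $X_0^e\in\mathbb N$ with $\sup_e X_0^e<\infty$, and a starting vertex $I_0=v_0$, the process $(I_n)_{n\ge0}$ with natural filtration $(\mathcal F_n)$ jumps at each step to a neighbour of its current vertex with $\mathbb P(I_{n+1}=v'\mid\mathcal F_n)1_{\{I_n=v\}}=\frac{W(X_n^{\{v,v'\}})}{\sum_{w\sim v}W(X_n^{\{v,w\}})}1_{\{I_n=v\sim v'\}}$, where $X_n^e=X_0^e+\sum_{k=0}^{n-1}1_{\{\{I_k,I_{k+1}\}=e\}}$. *)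

theory Defs
  imports "HOL-Probability.Probability"
begin

definition cyc_edge :: "nat \<Rightarrow> nat set" where
  "cyc_edge i = {i, (i + 1) mod 4}"

definition cyc_adj :: "nat \<Rightarrow> nat \<Rightarrow> bool" where
  "cyc_adj u v \<longleftrightarrow> (\<exists>i<4. {u, v} = cyc_edge i)"

text \<open>Weight of edge e after the walk has followed the finite path p (list of
  visited vertices): initial weight plus number of traversals so far.\<close>

definition ecount :: "(nat \<Rightarrow> nat) \<Rightarrow> nat list \<Rightarrow> nat \<Rightarrow> nat" where
  "ecount X0 p i = X0 i + card {k. Suc k < length p \<and> {p ! k, p ! Suc k} = cyc_edge i}"

definition edge_idx :: "nat \<Rightarrow> nat \<Rightarrow> nat" where
  "edge_idx u v = (THE i. i < 4 \<and> {u, v} = cyc_edge i)"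

definition errw_step :: "(nat \<Rightarrow> real) \<Rightarrow> (nat \<Rightarrow> nat) \<Rightarrow> nat list \<Rightarrow> nat \<Rightarrow> real" where
  "errw_step W X0 p v =
     (if cyc_adj (last p) v then
        W (ecount X0 p (edge_idx (last p) v)) /
        (\<Sum>w\<in>{w. w < 4 \<and> cyc_adj (last p) w}. W (ecount X0 p (edge_idx (last p) w)))
      else 0)"

definition errw_path_prob :: "(nat \<Rightarrow> real) \<Rightarrow> (nat \<Rightarrow> nat) \<Rightarrow> nat \<Rightarrow> nat list \<Rightarrow> real" where
  "errw_path_prob W X0 v0 p =
     (if p ! 0 = v0 then 1 else 0) *
     (\<Prod>k<length p - 1. errw_step W X0 (take (Suc k) p) (p ! Suc k))"

end

theory Submission
  imports Defs "HOL-Library.Infinite_Set"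
begin


lemma cyc_edge_simps: "cyc_edge 0 = {0,1}" "cyc_edge 1 = {1,2}" "cyc_edge 2 = {2,3}" "cyc_edge 3 = {3,0}"
  by (auto simp: cyc_edge_def)

lemma cyc_edge_Suc0: "cyc_edge (Suc 0) = {1,2}"
  by (auto simp: cyc_edge_def)

lemma ex4: "(\<exists>i<(4::nat). P i) \<longleftrightarrow> P 0 \<or> P 1 \<or> P 2 \<or> P 3"
  by (auto simp: less_Suc_eq numeral_eq_Suc)

lemma all4: "(\<forall>i<(4::nat). P i) \<longleftrightarrow> P 0 \<and> P 1 \<and> P 2 \<and> P 3"
  by (auto simp: less_Suc_eq numeral_eq_Suc)

lemma cyc_adj_iff: "cyc_adj u v \<longleftrightarrow> (u,v) \<in> {(0,1),(1,0),(1,2),(2,1),(2,3),(3,2),(3,0),(0,3)}"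
  unfolding cyc_adj_def ex4 cyc_edge_simps doubleton_eq_iff by simp

lemma cyc_edge_inj: "i = j" if "i < 4" "j < 4" "cyc_edge i = cyc_edge j"
proof -
  have "i \<in> {0,1,2,3}" "j \<in> {0,1,2,3}" using that by auto
  then show ?thesis using that(3) by (auto simp: cyc_edge_simps cyc_edge_Suc0 doubleton_eq_iff)
qed

lemma edge_idx_eq: "i < 4 \<Longrightarrow> {u,v} = cyc_edge i \<Longrightarrow> edge_idx u v = i"
  unfolding edge_idx_def by (rule the_equality) (auto intro: cyc_edge_inj)

lemma nbrs: assumes "u < 4" shows "{w. w < 4 \<and> cyc_adj u w} = {(u+1) mod 4, (u+3) mod 4}"
proof -
  have "u \<in> {0,1,2,3}" using assms by auto
  then show ?thesis by (auto simp: cyc_adj_iff)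
qed

lemma edge_a: "u < 4 \<Longrightarrow> edge_idx u ((u+1) mod 4) = u"
  by (rule edge_idx_eq) (auto simp: cyc_edge_def)

lemma edge_b: "u < 4 \<Longrightarrow> edge_idx u ((u+3) mod 4) = (u+3) mod 4"
proof (rule edge_idx_eq)
  assume "u < 4"
  then have "((u+3) mod 4 + 1) mod 4 = u" by presburger
  then show "{u, (u + 3) mod 4} = cyc_edge ((u + 3) mod 4)" by (auto simp: cyc_edge_def)
qed simp

lemma ab_ne: "(u+1) mod 4 \<noteq> ((u::nat)+3) mod 4" by presburger

lemma parity_ab: "(u::nat) < 4 \<Longrightarrow> even u \<longleftrightarrow> odd ((u+3) mod 4)" by presburger

lemma adj_lt4: "cyc_adj u v \<Longrightarrow> u < 4 \<and> v < 4"
  by (auto simp: cyc_adj_iff)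

lemma adj_edge: assumes "cyc_adj u v" shows "edge_idx u v < 4" "{u,v} = cyc_edge (edge_idx u v)"
proof -
  obtain i where "i < 4" "{u,v} = cyc_edge i" using assms unfolding cyc_adj_def by auto
  then show "edge_idx u v < 4" "{u,v} = cyc_edge (edge_idx u v)" using edge_idx_eq by auto
qed




lemma ecount_ge: "X0 i \<le> ecount X0 p i" by (simp add: ecount_def)

lemma ecount_snoc:
  assumes "q \<noteq> []"
  shows "ecount X0 (q @ [v]) i = ecount X0 q i + (if {last q, v} = cyc_edge i then 1 else 0)"
proof -
  let ?E = "cyc_edge i"
  define S where "S = {k. Suc k < length q \<and> {q ! k, q ! Suc k} = ?E}"
  define T where "T = {k. k = length q - 1 \<and> {last q, v} = ?E}"
  have lastq: "last q = q ! (length q - 1)" using assms by (simp add: last_conv_nth)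
  have nth1: "(q@[v]) ! k = q ! k" if "k < length q" for k using that by (simp add: nth_append)
  have nth2: "(q@[v]) ! length q = v" by simp
  have eq: "{k. Suc k < length (q@[v]) \<and> {(q@[v]) ! k, (q@[v]) ! Suc k} = ?E} = S \<union> T"
  proof (intro set_eqI iffI)
    fix k assume "k \<in> {k. Suc k < length (q@[v]) \<and> {(q@[v]) ! k, (q@[v]) ! Suc k} = ?E}"
    then have k: "Suc k < Suc (length q)" "{(q@[v]) ! k, (q@[v]) ! Suc k} = ?E" by auto
    show "k \<in> S \<union> T"
    proof (cases "Suc k < length q")
      case True then show ?thesis using k nth1[of k] nth1[of "Suc k"] by (simp add: S_def)
    next
      case False
      then have kk: "k = length q - 1" "Suc k = length q" using k by auto
      then show ?thesis using k nth1[of k] nth2 lastq by (simp add: T_def)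
    qed
  next
    fix k assume "k \<in> S \<union> T"
    then show "k \<in> {k. Suc k < length (q@[v]) \<and> {(q@[v]) ! k, (q@[v]) ! Suc k} = ?E}"
    proof
      assume "k \<in> S" then show ?thesis using nth1[of k] nth1[of "Suc k"] by (simp add: S_def)
    next
      assume kT: "k \<in> T"
      then have kk: "k = length q - 1" "Suc k = length q" using assms by (auto simp: T_def)
      then show ?thesis using kT nth1[of k] nth2 lastq by (simp add: T_def)
    qed
  qed
  have fin: "finite S" by (rule finite_subset[of _ "{..<length q}"]) (auto simp: S_def)
  have dis: "S \<inter> T = {}" by (auto simp: S_def T_def)
  have c2: "card T = (if {last q, v} = ?E then 1 else 0)"
    by (simp add: T_def)
  show ?thesis unfolding ecount_def eq
    by (subst card_Un_disjoint[OF fin _ dis]) (auto simp: c2 S_def T_def)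
qed

lemma path_prob_snoc:
  assumes "q \<noteq> []"
  shows "errw_path_prob W X0 v0 (q @ [v]) = errw_path_prob W X0 v0 q * errw_step W X0 q v"
proof -
  obtain n where n: "length q = Suc n" using assms by (cases q) auto
  have A: "(\<Prod>k<n. errw_step W X0 (take (Suc k) (q@[v])) ((q@[v]) ! Suc k))
         = (\<Prod>k<n. errw_step W X0 (take (Suc k) q) (q ! Suc k))"
    by (rule prod.cong) (auto simp: n nth_append)
  have A2: "(\<Prod>k<n. errw_step W X0 (take (Suc k) q) ((q@[v]) ! Suc k))
         = (\<Prod>k<n. errw_step W X0 (take (Suc k) q) (q ! Suc k))"
    by (rule prod.cong) (auto simp: n nth_append)
  have B: "take (Suc n) (q@[v]) = q" "(q@[v]) ! Suc n = v" using n nth_append_length[of q v] by auto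
  have C: "(q@[v]) ! 0 = q ! 0" using assms by (simp add: nth_append)
  show ?thesis unfolding errw_path_prob_def
    by (simp add: n prod.lessThan_Suc A A2 B C)
qed

definition Pn :: "nat \<Rightarrow> nat list set" where
  "Pn n = {p. length p = Suc n \<and> set p \<subseteq> {..<4}}"

lemma finite_Pn: "finite (Pn n)"
proof -
  have "Pn n = {xs. set xs \<subseteq> {..<4} \<and> length xs = Suc n}" unfolding Pn_def by auto
  then show ?thesis using finite_lists_length_eq[of "{..<4::nat}" "Suc n"] by simp
qed

lemma Pn_Suc: "Pn (Suc n) = (\<lambda>(q,v). q @ [v]) ` (Pn n \<times> {..<4})"
proof (intro set_eqI iffI)
  fix p assume p: "p \<in> Pn (Suc n)"
  then have "p \<noteq> []" by (auto simp: Pn_def)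
  then have "p = butlast p @ [last p]" by simp
  moreover have "butlast p \<in> Pn n" using p \<open>p \<noteq> []\<close>
    by (auto simp: Pn_def dest: in_set_butlastD)
  moreover have "last p < 4" using p \<open>p \<noteq> []\<close> last_in_set[of p] unfolding Pn_def by blast
  ultimately show "p \<in> (\<lambda>(q,v). q @ [v]) ` (Pn n \<times> {..<4})"
    by (intro image_eqI[where x="(butlast p, last p)"]) auto
qed (auto simp: Pn_def)

lemma sum_Pn_Suc: "(\<Sum>p\<in>Pn (Suc n). F p) = (\<Sum>q\<in>Pn n. \<Sum>v<4. F (q @ [v]))"
proof -
  have inj: "inj_on (\<lambda>(q,v). q @ [v]) (Pn n \<times> {..<4})"
    by (auto simp: inj_on_def)
  have "(\<Sum>p\<in>Pn (Suc n). F p) = (\<Sum>x\<in>Pn n \<times> {..<4}. F ((\<lambda>(q,v). q @ [v]) x))"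
    unfolding Pn_Suc by (simp add: sum.reindex[OF inj] o_def)
  also have "\<dots> = (\<Sum>q\<in>Pn n. \<Sum>v<4. F (q @ [v]))"
    by (subst sum.cartesian_product) (simp add: case_prod_beta)
  finally show ?thesis .
qed

lemma Pn_0: "Pn 0 = (\<lambda>v. [v]) ` {..<4}"
  by (auto simp: Pn_def length_Suc_conv)

lemma Pn_nonempty: "p \<in> Pn n \<Longrightarrow> p \<noteq> []"
  by (auto simp: Pn_def)

lemma Pn_last: "p \<in> Pn n \<Longrightarrow> last p < 4"
  using Pn_nonempty[of p n] last_in_set[of p] unfolding Pn_def by blast


lemma step_sum:
  fixes F :: "nat \<Rightarrow> complex"
  assumes u4: "last q < 4" and Wpos: "\<And>k. W k > 0"
  shows "(\<Sum>v<4. complex_of_real (errw_step W X0 q v) * F v) =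
    (of_real (W (ecount X0 q (last q))) * F ((last q + 1) mod 4)
     + of_real (W (ecount X0 q ((last q + 3) mod 4))) * F ((last q + 3) mod 4))
    / of_real (W (ecount X0 q (last q)) + W (ecount X0 q ((last q + 3) mod 4)))"
proof -
  define u where "u = last q"
  define a where "a = (u + 1) mod 4"
  define b where "b = (u + 3) mod 4"
  have u: "u < 4" using u4 by (simp add: u_def)
  have ab: "a \<noteq> b" unfolding a_def b_def by (rule ab_ne)
  have ea: "edge_idx u a = u" unfolding a_def using edge_a[OF u] .
  have eb: "edge_idx u b = b" unfolding b_def using edge_b[OF u] .
  define Wa where "Wa = W (ecount X0 q u)"
  define Wb where "Wb = W (ecount X0 q b)"
  have pos: "Wa > 0" "Wb > 0" using Wpos by (auto simp: Wa_def Wb_def)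
  have nb: "{v \<in> {..<4}. cyc_adj u v} = {a, b}" using nbrs[OF u] by (auto simp: a_def b_def)
  have D: "(\<Sum>w\<in>{w. w < 4 \<and> cyc_adj (last q) w}. W (ecount X0 q (edge_idx (last q) w))) = Wa + Wb"
  proof -
    have "{w. w < 4 \<and> cyc_adj (last q) w} = {a, b}" using nb by (auto simp: u_def)
    then show ?thesis using ab ea eb by (simp add: Wa_def Wb_def u_def)
  qed
  have step: "errw_step W X0 q v = (if cyc_adj u v then W (ecount X0 q (edge_idx u v)) / (Wa + Wb) else 0)" for v
    unfolding errw_step_def D u_def by simp
  have "(\<Sum>v<4. complex_of_real (errw_step W X0 q v) * F v)
      = (\<Sum>v<4. if cyc_adj u v then complex_of_real (W (ecount X0 q (edge_idx u v)) / (Wa + Wb)) * F v else 0)"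
    by (rule sum.cong) (auto simp: step)
  also have "\<dots> = (\<Sum>v\<in>{v \<in> {..<4}. cyc_adj u v}. complex_of_real (W (ecount X0 q (edge_idx u v)) / (Wa + Wb)) * F v)"
    by (rule sum.inter_filter[symmetric]) simp
  also have "\<dots> = complex_of_real (Wa / (Wa + Wb)) * F a + complex_of_real (Wb / (Wa + Wb)) * F b"
    unfolding nb using ab ea eb by (simp add: Wa_def Wb_def)
  also have "\<dots> = (of_real Wa * F a + of_real Wb * F b) / of_real (Wa + Wb)"
  proof -
    have d: "complex_of_real Wa + complex_of_real Wb \<noteq> 0"
      using pos by (metis of_real_add of_real_eq_0_iff add_pos_pos less_irrefl)
    then show ?thesis by (simp add: add_divide_distrib mult.commute)
  qed
  finally show ?thesis by (simp add: Wa_def Wb_def a_def b_def u_def)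
qed

lemma step_sum_1:
  assumes "last q < 4" "\<And>k. W k > 0"
  shows "(\<Sum>v<4. errw_step W X0 q v) = 1"
proof -
  have pos: "W (ecount X0 q (last q)) + W (ecount X0 q ((last q + 3) mod 4)) > 0"
    using assms(2) by (simp add: add_pos_pos)
  define A where "A = W (ecount X0 q (last q))"
  define B where "B = W (ecount X0 q ((last q + 3) mod 4))"
  have d: "complex_of_real A + complex_of_real B \<noteq> 0"
    using pos by (metis A_def B_def of_real_add of_real_eq_0_iff less_irrefl)
  have "complex_of_real (\<Sum>v<4. errw_step W X0 q v) = (\<Sum>v<4. complex_of_real (errw_step W X0 q v) * 1)"
    by simp
  also have "\<dots> = (of_real A * 1 + of_real B * 1) / of_real (A + B)"
    unfolding A_def B_def by (rule step_sum[OF assms])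
  also have "\<dots> = 1" using d by simp
  finally have "complex_of_real (\<Sum>v<4. errw_step W X0 q v) = complex_of_real 1" by simp
  then show ?thesis by (rule of_real_eq_iff[THEN iffD1])
qed


lemma path_prob_sum:
  assumes "v0 < 4" "\<And>k. W k > 0"
  shows "(\<Sum>p\<in>Pn n. errw_path_prob W X0 v0 p) = 1"
proof (induction n)
  case 0
  have "(\<Sum>p\<in>Pn 0. errw_path_prob W X0 v0 p) = (\<Sum>v<4. errw_path_prob W X0 v0 [v])"
    unfolding Pn_0 by (subst sum.reindex) (auto simp: inj_on_def)
  also have "\<dots> = (\<Sum>v<4. if v = v0 then 1 else 0)"
    by (rule sum.cong) (auto simp: errw_path_prob_def)
  also have "\<dots> = 1" using assms(1) by simp
  finally show ?case .
next
  case (Suc n)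
  have "(\<Sum>p\<in>Pn (Suc n). errw_path_prob W X0 v0 p)
      = (\<Sum>q\<in>Pn n. \<Sum>v<4. errw_path_prob W X0 v0 q * errw_step W X0 q v)"
    unfolding sum_Pn_Suc by (intro sum.cong refl) (simp add: path_prob_snoc Pn_nonempty)
  also have "\<dots> = (\<Sum>q\<in>Pn n. errw_path_prob W X0 v0 q * (\<Sum>v<4. errw_step W X0 q v))"
    by (simp add: sum_distrib_left)
  also have "\<dots> = (\<Sum>q\<in>Pn n. errw_path_prob W X0 v0 q)"
    by (intro sum.cong refl) (simp add: step_sum_1[OF Pn_last assms(2)])
  finally show ?case using Suc.IH by simp
qed

definition sg :: "nat \<Rightarrow> real" where "sg e = (if even e then 1 else -1)"

definition zf :: "(nat \<Rightarrow> real) \<Rightarrow> real \<Rightarrow> nat \<Rightarrow> nat \<Rightarrow> complex" where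
  "zf W \<theta> e k = 1 - \<i> * complex_of_real (\<theta> * sg e / W k)"

definition wfac :: "(nat \<Rightarrow> real) \<Rightarrow> (nat \<Rightarrow> nat) \<Rightarrow> real \<Rightarrow> nat \<Rightarrow> nat \<Rightarrow> complex" where
  "wfac W X0 \<theta> e k = (if X0 e \<le> k then zf W \<theta> e k else 1)"

definition Pp :: "(nat \<Rightarrow> real) \<Rightarrow> (nat \<Rightarrow> nat) \<Rightarrow> real \<Rightarrow> nat \<Rightarrow> nat \<Rightarrow> complex" where
  "Pp W X0 \<theta> e c = (\<Prod>k<c. wfac W X0 \<theta> e k)"

definition Mf :: "(nat \<Rightarrow> real) \<Rightarrow> (nat \<Rightarrow> nat) \<Rightarrow> real \<Rightarrow> nat list \<Rightarrow> complex" where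
  "Mf W X0 \<theta> q = (\<Prod>e<4. Pp W X0 \<theta> e (ecount X0 q e))"

lemma Mf_snoc:
  assumes q: "q \<noteq> []" and adj: "cyc_adj (last q) v"
  shows "Mf W X0 \<theta> (q @ [v]) = Mf W X0 \<theta> q * zf W \<theta> (edge_idx (last q) v) (ecount X0 q (edge_idx (last q) v))"
proof -
  define e where "e = edge_idx (last q) v"
  have e4: "e < 4" and ee: "{last q, v} = cyc_edge e" using adj_edge[OF adj] by (auto simp: e_def)
  have cnt: "ecount X0 (q @ [v]) i = ecount X0 q i + (if i = e then 1 else 0)" if "i < 4" for i
  proof -
    have "{last q, v} = cyc_edge i \<longleftrightarrow> i = e" using ee e4 that cyc_edge_inj by metis
    then show ?thesis using ecount_snoc[OF q] by simp
  qed
  have "Mf W X0 \<theta> (q @ [v]) = (\<Prod>i<4. Pp W X0 \<theta> i (ecount X0 q i) * (if i = e then wfac W X0 \<theta> e (ecount X0 q e) else 1))"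
    unfolding Mf_def by (intro prod.cong refl) (auto simp: cnt Pp_def)
  also have "\<dots> = Mf W X0 \<theta> q * wfac W X0 \<theta> e (ecount X0 q e)"
    using e4 by (simp add: prod.distrib Mf_def)
  also have "wfac W X0 \<theta> e (ecount X0 q e) = zf W \<theta> e (ecount X0 q e)"
    by (simp add: wfac_def ecount_ge)
  finally show ?thesis by (simp add: e_def)
qed

lemma step_factor:
  assumes u4: "last q < 4" and Wpos: "\<And>k. W k > 0"
  shows "(\<Sum>v<4. complex_of_real (errw_step W X0 q v) * zf W \<theta> (edge_idx (last q) v) (ecount X0 q (edge_idx (last q) v))) = 1"
proof -
  define u where "u = last q"
  have u: "u < 4" using u4 by (simp add: u_def)
  define A where "A = W (ecount X0 q u)"
  define B where "B = W (ecount X0 q ((u + 3) mod 4))"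
  have pos: "A > 0" "B > 0" using Wpos by (auto simp: A_def B_def)
  have sgb: "sg ((u + 3) mod 4) = - sg u" unfolding sg_def using parity_ab[OF u] by auto
  have d: "complex_of_real A + complex_of_real B \<noteq> 0"
    using pos by (metis of_real_add of_real_eq_0_iff add_pos_pos less_irrefl)
  have "(\<Sum>v<4. complex_of_real (errw_step W X0 q v) * zf W \<theta> (edge_idx (last q) v) (ecount X0 q (edge_idx (last q) v)))
     = (of_real A * zf W \<theta> u (ecount X0 q u) + of_real B * zf W \<theta> ((u+3) mod 4) (ecount X0 q ((u+3) mod 4))) / of_real (A + B)"
    unfolding step_sum[OF u4 Wpos] using edge_a[OF u] edge_b[OF u] by (simp add: A_def B_def u_def)
  also have "of_real A * zf W \<theta> u (ecount X0 q u) = of_real A - \<i> * of_real (\<theta> * sg u)"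
    using pos by (simp add: zf_def A_def[symmetric] field_simps)
  also have "of_real B * zf W \<theta> ((u+3) mod 4) (ecount X0 q ((u+3) mod 4)) = of_real B + \<i> * of_real (\<theta> * sg u)"
    using pos by (simp add: zf_def B_def[symmetric] sgb field_simps)
  finally show ?thesis using d by simp
qed

lemma mart:
  assumes "m \<le> n" and Wpos: "\<And>k. W k > 0"
  shows "(\<Sum>p\<in>Pn n. complex_of_real (errw_path_prob W X0 v0 p) * (Mf W X0 \<theta> p * g (take (Suc m) p)))
       = (\<Sum>p\<in>Pn m. complex_of_real (errw_path_prob W X0 v0 p) * (Mf W X0 \<theta> p * g p))"
  using assms(1)
proof (induction n rule: dec_induct)
  case base
  show ?case by (intro sum.cong refl) (simp add: Pn_def)
next
  case (step n)
  let ?z = "\<lambda>q v. zf W \<theta> (edge_idx (last q) v) (ecount X0 q (edge_idx (last q) v))"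
  have "(\<Sum>p\<in>Pn (Suc n). complex_of_real (errw_path_prob W X0 v0 p) * (Mf W X0 \<theta> p * g (take (Suc m) p)))
     = (\<Sum>q\<in>Pn n. \<Sum>v<4. complex_of_real (errw_path_prob W X0 v0 q) * (Mf W X0 \<theta> q * g (take (Suc m) q))
            * (complex_of_real (errw_step W X0 q v) * ?z q v))"
    unfolding sum_Pn_Suc
  proof (intro sum.cong refl)
    fix q and v :: nat assume q: "q \<in> Pn n" and v: "v \<in> {..<4}"
    have qne: "q \<noteq> []" using Pn_nonempty[OF q] .
    have tk: "take (Suc m) (q @ [v]) = take (Suc m) q" using q step.hyps by (simp add: Pn_def)
    show "complex_of_real (errw_path_prob W X0 v0 (q @ [v])) * (Mf W X0 \<theta> (q @ [v]) * g (take (Suc m) (q @ [v])))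
       = complex_of_real (errw_path_prob W X0 v0 q) * (Mf W X0 \<theta> q * g (take (Suc m) q))
            * (complex_of_real (errw_step W X0 q v) * ?z q v)"
    proof (cases "cyc_adj (last q) v")
      case True
      then show ?thesis unfolding tk path_prob_snoc[OF qne] Mf_snoc[OF qne True] by (simp add: algebra_simps)
    next
      case False
      then show ?thesis unfolding tk path_prob_snoc[OF qne] by (simp add: errw_step_def)
    qed
  qed
  also have "\<dots> = (\<Sum>q\<in>Pn n. complex_of_real (errw_path_prob W X0 v0 q) * (Mf W X0 \<theta> q * g (take (Suc m) q))
            * (\<Sum>v<4. complex_of_real (errw_step W X0 q v) * ?z q v))"
    by (simp add: sum_distrib_left)
  also have "\<dots> = (\<Sum>q\<in>Pn n. complex_of_real (errw_path_prob W X0 v0 q) * (Mf W X0 \<theta> q * g (take (Suc m) q)))"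
    by (intro sum.cong refl) (simp add: step_factor[OF Pn_last Wpos])
  finally show ?case using step.IH by simp
qed




lemma sg_sq: "(sg e)^2 = 1" by (simp add: sg_def)

lemma norm_zf: "norm (zf W \<theta> e k) = sqrt (1 + (\<theta> * sg e / W k)^2)"
  by (simp add: zf_def norm_complex_def)

lemma norm_zf_ge1: "norm (zf W \<theta> e k) \<ge> 1"
  unfolding norm_zf by simp

lemma norm_zf_ge: assumes "W k > 0" shows "norm (zf W \<theta> e k) \<ge> \<bar>\<theta>\<bar> / W k"
proof -
  have "\<bar>\<theta>\<bar> / W k = \<bar>\<theta> * sg e / W k\<bar>" using assms by (simp add: sg_def abs_mult)
  also have "\<dots> = sqrt ((\<theta> * sg e / W k)^2)" by simp
  also have "\<dots> \<le> sqrt (1 + (\<theta> * sg e / W k)^2)" by (rule real_sqrt_le_mono) simp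
  finally show ?thesis unfolding norm_zf .
qed

lemma norm_wfac_ge1: "norm (wfac W X0 \<theta> e k) \<ge> 1"
  by (simp add: wfac_def norm_zf_ge1)

lemma norm_wfac_minus1: assumes "W k > 0" shows "norm (wfac W X0 \<theta> e k - 1) \<le> \<bar>\<theta>\<bar> / W k"
proof -
  have "zf W \<theta> e k - 1 = - (\<i> * complex_of_real (\<theta> * sg e / W k))" by (simp add: zf_def)
  then have "norm (zf W \<theta> e k - 1) = \<bar>\<theta> * sg e / W k\<bar>"
    by (simp only: norm_minus_cancel norm_mult norm_ii norm_of_real mult_1)
  also have "\<dots> = \<bar>\<theta>\<bar> / W k" using assms by (simp add: sg_def abs_mult)
  finally show ?thesis using assms by (simp add: wfac_def)
qed

definition Le :: "(nat \<Rightarrow> real) \<Rightarrow> (nat \<Rightarrow> nat) \<Rightarrow> real \<Rightarrow> nat \<Rightarrow> complex" where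
  "Le W X0 \<theta> e = prodinf (wfac W X0 \<theta> e)"

lemma Pp_lim:
  assumes Wpos: "\<And>k. W k > 0" and sm: "summable (\<lambda>k. 1 / W k)"
  shows "(\<lambda>c. Pp W X0 \<theta> e c) \<longlonglongrightarrow> Le W X0 \<theta> e"
proof -
  have "summable (\<lambda>k. \<bar>\<theta>\<bar> / W k)" using summable_mult[OF sm, of "\<bar>\<theta>\<bar>"] by simp
  then have "summable (\<lambda>k. norm (wfac W X0 \<theta> e k - 1))"
    by (rule summable_comparison_test'[where N=0]) (simp add: norm_wfac_minus1 Wpos)
  then have "convergent_prod (wfac W X0 \<theta> e)"
    by (intro abs_convergent_prod_imp_convergent_prod summable_imp_abs_convergent_prod)
  then have "(\<lambda>n. \<Prod>i\<le>n. wfac W X0 \<theta> e i) \<longlonglongrightarrow> Le W X0 \<theta> e"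
    unfolding Le_def by (rule convergent_prod_LIMSEQ)
  then show ?thesis unfolding Pp_def by (simp add: LIMSEQ_lessThan_iff_atMost)
qed

lemma norm_Pp_Suc: "norm (Pp W X0 \<theta> e (Suc c)) = norm (Pp W X0 \<theta> e c) * norm (wfac W X0 \<theta> e c)"
  by (simp add: Pp_def norm_mult)

lemma norm_Pp_le:
  assumes Wpos: "\<And>k. W k > 0" and sm: "summable (\<lambda>k. 1 / W k)"
  shows "norm (Pp W X0 \<theta> e c) \<le> norm (Le W X0 \<theta> e)"
proof -
  have inc: "incseq (\<lambda>c. norm (Pp W X0 \<theta> e c))"
  proof (rule incseq_SucI)
    fix c
    have "norm (Pp W X0 \<theta> e c) * 1 \<le> norm (Pp W X0 \<theta> e c) * norm (wfac W X0 \<theta> e c)"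
      by (rule mult_left_mono[OF norm_wfac_ge1]) simp
    then show "norm (Pp W X0 \<theta> e c) \<le> norm (Pp W X0 \<theta> e (Suc c))" by (simp add: norm_Pp_Suc)
  qed
  show ?thesis by (rule incseq_le[OF inc tendsto_norm[OF Pp_lim[OF Wpos sm]]])
qed

lemma norm_Le_ge1:
  assumes Wpos: "\<And>k. W k > 0" and sm: "summable (\<lambda>k. 1 / W k)"
  shows "norm (Le W X0 \<theta> e) \<ge> 1"
  using norm_Pp_le[OF Wpos sm, of X0 \<theta> e 0] by (simp add: Pp_def)

lemma norm_Pp_le2:
  assumes Wpos: "\<And>k. W k > 0" and sm: "summable (\<lambda>k. 1 / W k)"
  shows "norm (Pp W X0 \<theta> e c) * norm (wfac W X0 \<theta> e c) \<le> norm (Le W X0 \<theta> e)"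
  using norm_Pp_le[OF Wpos sm, of X0 \<theta> e "Suc c"] by (simp add: norm_Pp_Suc)

definition Gm :: "(nat \<Rightarrow> real) \<Rightarrow> (nat \<Rightarrow> nat) \<Rightarrow> real \<Rightarrow> real" where
  "Gm W X0 \<theta> = (\<Prod>e<4. norm (Le W X0 \<theta> e))"

lemma Gm_ge1:
  assumes Wpos: "\<And>k. W k > 0" and sm: "summable (\<lambda>k. 1 / W k)"
  shows "Gm W X0 \<theta> \<ge> 1"
  unfolding Gm_def by (rule prod_ge_1) (use norm_Le_ge1[OF Wpos sm] in auto)

lemma norm_Mf_le:
  assumes Wpos: "\<And>k. W k > 0" and sm: "summable (\<lambda>k. 1 / W k)"
  shows "norm (Mf W X0 \<theta> q) \<le> Gm W X0 \<theta>"
  unfolding Mf_def Gm_def prod_norm[symmetric]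
  by (rule prod_mono) (simp add: norm_Pp_le[OF Wpos sm])

lemma norm_Mf_le2:
  assumes Wpos: "\<And>k. W k > 0" and sm: "summable (\<lambda>k. 1 / W k)"
  shows "norm (Mf W X0 \<theta> q) * norm (wfac W X0 \<theta> 0 (ecount X0 q 0)) \<le> Gm W X0 \<theta>"
proof -
  have fin: "finite {..<4::nat}" "(0::nat) \<in> {..<4}" by auto
  have "norm (Mf W X0 \<theta> q) * norm (wfac W X0 \<theta> 0 (ecount X0 q 0))
      = (norm (Pp W X0 \<theta> 0 (ecount X0 q 0)) * norm (wfac W X0 \<theta> 0 (ecount X0 q 0)))
        * (\<Prod>e\<in>{..<4} - {0}. norm (Pp W X0 \<theta> e (ecount X0 q e)))"
    unfolding Mf_def prod.remove[OF fin] norm_mult prod_norm by (simp add: ac_simps)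
  also have "\<dots> \<le> norm (Le W X0 \<theta> 0) * (\<Prod>e\<in>{..<4} - {0}. norm (Le W X0 \<theta> e))"
    by (intro mult_mono prod_mono norm_Pp_le2[OF Wpos sm] norm_Pp_le[OF Wpos sm] conjI)
       (auto intro: prod_nonneg)
  also have "\<dots> = Gm W X0 \<theta>"
    unfolding Gm_def prod.remove[OF fin] ..
  finally show ?thesis .
qed




locale errw_setup =
  fixes M :: "'a measure" and I :: "nat \<Rightarrow> 'a \<Rightarrow> nat"
    and W :: "nat \<Rightarrow> real" and X0 :: "nat \<Rightarrow> nat" and v0 :: nat
  assumes PS: "prob_space M"
    and Wpos: "\<And>k. W k > 0"
    and sm: "summable (\<lambda>k. 1 / W k)"
    and v0: "v0 < 4"
    and Imeas: "\<And>n. I n \<in> measurable M (count_space UNIV)"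
    and cyl: "\<And>p. p \<noteq> [] \<Longrightarrow>
           measure M {\<omega> \<in> space M. \<forall>k<length p. I k \<omega> = p ! k} = errw_path_prob W X0 v0 p"
begin

sublocale prob_space M by (rule PS)

definition pre :: "nat \<Rightarrow> 'a \<Rightarrow> nat list" where
  "pre n \<omega> = map (\<lambda>k. I k \<omega>) [0..<Suc n]"

lemma length_pre[simp]: "length (pre n \<omega>) = Suc n" by (simp add: pre_def)

lemma nth_pre: "k < Suc n \<Longrightarrow> pre n \<omega> ! k = I k \<omega>"
  by (simp add: pre_def nth_map_upt del: upt_Suc)

lemma pre_eq_iff: "pre n \<omega> = p \<longleftrightarrow> length p = Suc n \<and> (\<forall>k<length p. I k \<omega> = p ! k)"
  by (auto simp: list_eq_iff_nth_eq nth_pre)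

lemma take_pre: "m \<le> n \<Longrightarrow> take (Suc m) (pre n \<omega>) = pre m \<omega>"
  by (simp add: pre_def take_map del: upt_Suc)

lemma cylset_meas: "{\<omega> \<in> space M. \<forall>k<N. I k \<omega> = c k} \<in> sets M"
proof -
  have "{\<omega> \<in> space M. \<forall>k<N. I k \<omega> = c k} = space M - (\<Union>k\<in>{..<N}. space M - I k -` {c k} \<inter> space M)"
    by auto
  also have "\<dots> \<in> sets M"
    using Imeas by (intro sets.Diff sets.top sets.finite_UN) (auto simp: measurable_def)
  finally show ?thesis .
qed


lemma pre_set_eq: "{\<omega> \<in> space M. pre n \<omega> = p} =
   (if length p = Suc n then {\<omega> \<in> space M. \<forall>k<Suc n. I k \<omega> = p ! k} else {})"
proof (cases "length p = Suc n")
  case True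
  then show ?thesis unfolding pre_eq_iff by simp
next
  case False
  then show ?thesis unfolding pre_eq_iff by simp
qed

lemma pre_single_meas: "{\<omega> \<in> space M. pre n \<omega> = p} \<in> sets M"
  unfolding pre_set_eq by (simp add: cylset_meas)

lemma pre_meas: "pre n \<in> measurable M (count_space UNIV)"
proof -
  have c: "countable (UNIV :: nat list set)" by simp
  show ?thesis unfolding measurable_count_space_eq2_countable
  proof (intro conjI ballI)
    fix a :: "nat list" assume "a \<in> UNIV"
    have "pre n -` {a} \<inter> space M = {\<omega> \<in> space M. pre n \<omega> = a}" by auto
    then show "pre n -` {a} \<inter> space M \<in> sets M" using pre_single_meas by simp
  qed auto
qed

lemma cyl_pre: "length p = Suc n \<Longrightarrow> measure M {\<omega> \<in> space M. pre n \<omega> = p} = errw_path_prob W X0 v0 p"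
proof -
  assume l: "length p = Suc n"
  then have "p \<noteq> []" by auto
  moreover have "{\<omega> \<in> space M. pre n \<omega> = p} = {\<omega> \<in> space M. \<forall>k<length p. I k \<omega> = p ! k}"
    unfolding pre_eq_iff using l by simp
  ultimately show ?thesis using cyl[of p] by simp
qed

definition Bset :: "nat \<Rightarrow> nat list set \<Rightarrow> 'a set" where
  "Bset m S = {\<omega> \<in> space M. pre m \<omega> \<in> S}"

lemma Bset_meas: "Bset m S \<in> sets M"
proof -
  have "Bset m S = pre m -` S \<inter> space M" by (auto simp: Bset_def)
  then show ?thesis using measurable_sets[OF pre_meas, of S] by simp
qed

lemma AE_Pn: "AE \<omega> in M. pre n \<omega> \<in> Pn n"
proof -
  have "AE \<omega> in M. \<omega> \<in> {\<omega> \<in> space M. pre n \<omega> \<in> Pn n}"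
  proof (rule AE_prob_1)
  have "{\<omega> \<in> space M. pre n \<omega> \<in> Pn n} = (\<Union>p\<in>Pn n. {\<omega> \<in> space M. pre n \<omega> = p})" by auto
  then have "prob {\<omega> \<in> space M. pre n \<omega> \<in> Pn n} = prob (\<Union>p\<in>Pn n. {\<omega> \<in> space M. pre n \<omega> = p})"
    by simp
  also have "\<dots> = (\<Sum>p\<in>Pn n. prob {\<omega> \<in> space M. pre n \<omega> = p})"
    by (rule finite_measure_finite_Union) (use finite_Pn pre_single_meas in \<open>auto simp: disjoint_family_on_def\<close>)
  also have "\<dots> = (\<Sum>p\<in>Pn n. errw_path_prob W X0 v0 p)"
    by (intro sum.cong refl) (simp add: cyl_pre Pn_def)
  also have "\<dots> = 1" by (rule path_prob_sum[OF v0 Wpos])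
  finally show "prob {\<omega> \<in> space M. pre n \<omega> \<in> Pn n} = 1" .
  qed
  then show ?thesis by auto
qed

lemma integral_pre:
  fixes F :: "nat list \<Rightarrow> 'b::{banach, second_countable_topology}"
  shows "(\<integral>\<omega>. F (pre n \<omega>) \<partial>M) = (\<Sum>p\<in>Pn n. errw_path_prob W X0 v0 p *\<^sub>R F p)"
proof -
  have "(\<integral>\<omega>. F (pre n \<omega>) \<partial>M) = (\<integral>\<omega>. (\<Sum>p\<in>Pn n. indicator {\<omega> \<in> space M. pre n \<omega> = p} \<omega> *\<^sub>R F p) \<partial>M)"
  proof (rule integral_cong_AE)
    show "(\<lambda>\<omega>. F (pre n \<omega>)) \<in> borel_measurable M"
      by (rule measurable_compose[OF pre_meas]) simp
    show "(\<lambda>\<omega>. \<Sum>p\<in>Pn n. indicator {\<omega> \<in> space M. pre n \<omega> = p} \<omega> *\<^sub>R F p) \<in> borel_measurable M"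
      using pre_single_meas by (intro borel_measurable_sum borel_measurable_scaleR borel_measurable_indicator) auto
    show "AE \<omega> in M. F (pre n \<omega>) = (\<Sum>p\<in>Pn n. indicator {\<omega> \<in> space M. pre n \<omega> = p} \<omega> *\<^sub>R F p)"
      using AE_Pn[of n] AE_space
    proof eventually_elim
      case (elim \<omega>)
      have "(\<Sum>p\<in>Pn n. indicator {\<omega> \<in> space M. pre n \<omega> = p} \<omega> *\<^sub>R F p)
          = (\<Sum>p\<in>Pn n. if pre n \<omega> = p then F p else 0)"
        using elim by (intro sum.cong refl) (auto simp: indicator_def)
      also have "\<dots> = F (pre n \<omega>)" using elim finite_Pn by (simp add: sum.delta)
      finally show ?case by simp
    qed
  qed
  also have "\<dots> = (\<Sum>p\<in>Pn n. (\<integral>\<omega>. indicator {\<omega> \<in> space M. pre n \<omega> = p} \<omega> *\<^sub>R F p \<partial>M))"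
    by (rule Bochner_Integration.integral_sum[where f="\<lambda>p \<omega>. indicator {\<omega> \<in> space M. pre n \<omega> = p} \<omega> *\<^sub>R F p"])
       (auto intro!: integrable_scaleR_left integrable_real_indicator pre_single_meas simp: emeasure_eq_measure)
  also have "\<dots> = (\<Sum>p\<in>Pn n. errw_path_prob W X0 v0 p *\<^sub>R F p)"
  proof (intro sum.cong refl)
    fix p assume p: "p \<in> Pn n"
    have "has_bochner_integral M (\<lambda>\<omega>. indicator {\<omega> \<in> space M. pre n \<omega> = p} \<omega> *\<^sub>R F p)
            (measure M {\<omega> \<in> space M. pre n \<omega> = p} *\<^sub>R F p)"
      by (rule has_bochner_integral_indicator) (simp_all add: pre_single_meas emeasure_eq_measure)
    then show "(\<integral>\<omega>. indicator {\<omega> \<in> space M. pre n \<omega> = p} \<omega> *\<^sub>R F p \<partial>M) = errw_path_prob W X0 v0 p *\<^sub>R F p"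
      using p by (simp add: has_bochner_integral_integral_eq cyl_pre Pn_def)
  qed
  finally show ?thesis .
qed


lemma mart_int:
  assumes "m \<le> n"
  shows "(\<integral>\<omega>. indicator (Bset m S) \<omega> * Mf W X0 \<theta> (pre n \<omega>) \<partial>M)
       = (\<integral>\<omega>. indicator (Bset m S) \<omega> * Mf W X0 \<theta> (pre m \<omega>) \<partial>M)"
proof -
  define g :: "nat list \<Rightarrow> complex" where "g x = (if x \<in> S then 1 else 0)" for x
  have "(\<integral>\<omega>. indicator (Bset m S) \<omega> * Mf W X0 \<theta> (pre n \<omega>) \<partial>M)
      = (\<integral>\<omega>. (\<lambda>p. Mf W X0 \<theta> p * g (take (Suc m) p)) (pre n \<omega>) \<partial>M)"
    by (rule Bochner_Integration.integral_cong)
       (auto simp: take_pre[OF assms] g_def Bset_def indicator_def)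
  also have "\<dots> = (\<Sum>p\<in>Pn n. complex_of_real (errw_path_prob W X0 v0 p) * (Mf W X0 \<theta> p * g (take (Suc m) p)))"
    using integral_pre[of "\<lambda>p. Mf W X0 \<theta> p * g (take (Suc m) p)" n] by (simp add: scaleR_conv_of_real)
  also have "\<dots> = (\<Sum>p\<in>Pn m. complex_of_real (errw_path_prob W X0 v0 p) * (Mf W X0 \<theta> p * g p))"
    by (rule mart[OF assms Wpos])
  also have "\<dots> = (\<integral>\<omega>. (\<lambda>p. Mf W X0 \<theta> p * g p) (pre m \<omega>) \<partial>M)"
    using integral_pre[of "\<lambda>p. Mf W X0 \<theta> p * g p" m] by (simp add: scaleR_conv_of_real)
  also have "\<dots> = (\<integral>\<omega>. indicator (Bset m S) \<omega> * Mf W X0 \<theta> (pre m \<omega>) \<partial>M)"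
    by (rule Bochner_Integration.integral_cong)
       (auto simp: g_def Bset_def indicator_def)
  finally show ?thesis .
qed

end



context errw_setup begin

definition approx :: "'a set \<Rightarrow> bool" where
  "approx X \<longleftrightarrow> (\<forall>\<eta>>0. \<exists>m S. measure M ((X - Bset m S) \<union> (Bset m S - X)) < \<eta>)"

definition Gen :: "'a set set" where
  "Gen = {X. \<exists>m S. X = Bset m S}"

lemma Gen_sub: "Gen \<subseteq> Pow (space M)"
  by (auto simp: Gen_def Bset_def)

lemma Bset_compl: "Bset m (- S) = space M - Bset m S"
  by (auto simp: Bset_def)

lemma sigma_approx:
  assumes "X \<in> sigma_sets (space M) Gen"
  shows "X \<in> sets M \<and> approx X"
  using assms
proof (induction rule: sigma_sets.induct)
  case (Basic a)
  then obtain m S where a: "a = Bset m S" by (auto simp: Gen_def)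
  have "measure M ((Bset m S - Bset m S) \<union> (Bset m S - Bset m S)) = 0" by simp
  then show ?case unfolding approx_def a using Bset_meas by (metis less_eq_real_def)
next
  case Empty
  have "Bset 0 {} = {}" by (simp add: Bset_def)
  then show ?case unfolding approx_def by (metis Diff_empty Un_empty_left measure_empty sets.empty_sets)
next
  case (Compl a)
  then have a: "a \<in> sets M" "approx a" by auto
  have "approx (space M - a)"
    unfolding approx_def
  proof (intro allI impI)
    fix \<eta> :: real assume "\<eta> > 0"
    then obtain m S where ms: "measure M ((a - Bset m S) \<union> (Bset m S - a)) < \<eta>"
      using a(2) unfolding approx_def by blast
    have sub: "a \<subseteq> space M" "Bset m S \<subseteq> space M" using a(1) sets.sets_into_space by (auto simp: Bset_def)
    have "((space M - a) - Bset m (- S)) \<union> (Bset m (- S) - (space M - a)) = (a - Bset m S) \<union> (Bset m S - a)"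
      unfolding Bset_compl using sub by blast
    then show "\<exists>m S. measure M (((space M - a) - Bset m S) \<union> (Bset m S - (space M - a))) < \<eta>"
      using ms by metis
  qed
  then show ?case using a by auto
next
  case (Union a)
  have ameas: "\<And>i. a i \<in> sets M" and aapp: "\<And>i. approx (a i)" using Union.IH by auto
  have Umeas: "(\<Union>i. a i) \<in> sets M" using ameas by auto
  have "approx (\<Union>i. a i)"
    unfolding approx_def
  proof (intro allI impI)
    fix \<eta> :: real assume eta: "\<eta> > 0"
    define A' where "A' N = (\<Union>i<N. a i)" for N
    have A'meas: "A' N \<in> sets M" for N using ameas by (auto simp: A'_def)
    have inc: "incseq A'" unfolding incseq_def A'_def by (meson UN_mono lessThan_subset_iff order_refl)
    have UA: "(\<Union>N. A' N) = (\<Union>i. a i)" by (auto simp: A'_def)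
    have lim: "(\<lambda>N. measure M (A' N)) \<longlonglongrightarrow> measure M (\<Union>i. a i)"
      using finite_Lim_measure_incseq[of A'] A'meas inc UA by auto
    have "\<eta> / 2 > 0" using eta by simp
    from LIMSEQ_D[OF lim this] obtain N0 where "\<forall>n\<ge>N0. norm (measure M (A' n) - measure M (\<Union>i. a i)) < \<eta> / 2"
      by blast
    then have N: "norm (measure M (A' N0) - measure M (\<Union>i. a i)) < \<eta> / 2" by simp
    define N where "N = N0"
    have A'U: "A' N \<subseteq> (\<Union>i. a i)" by (auto simp: A'_def)
    have d1: "measure M ((\<Union>i. a i) - A' N) < \<eta> / 2"
    proof -
      have "\<bar>measure M (A' N) - measure M (\<Union>i. a i)\<bar> < \<eta> / 2" using N by (simp add: N_def)
      then have "measure M (\<Union>i. a i) - measure M (A' N) < \<eta> / 2" by linarith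
      then show ?thesis using finite_measure_Diff[OF Umeas A'meas A'U] by simp
    qed
    define \<eta>' where "\<eta>' = \<eta> / (2 * Suc N)"
    have eta': "\<eta>' > 0" using eta by (simp add: \<eta>'_def)
    have "\<forall>i. \<exists>mS. measure M ((a i - Bset (fst mS) (snd mS)) \<union> (Bset (fst mS) (snd mS) - a i)) < \<eta>'"
    proof
      fix i
      from aapp[of i] eta' obtain m S where "measure M ((a i - Bset m S) \<union> (Bset m S - a i)) < \<eta>'"
        unfolding approx_def by blast
      then show "\<exists>mS. measure M ((a i - Bset (fst mS) (snd mS)) \<union> (Bset (fst mS) (snd mS) - a i)) < \<eta>'"
        by (intro exI[of _ "(m, S)"]) simp
    qed
    then have "\<exists>f. \<forall>i. measure M ((a i - Bset (fst (f i)) (snd (f i))) \<union> (Bset (fst (f i)) (snd (f i)) - a i)) < \<eta>'"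
      by (rule choice)
    then obtain f where f: "\<And>i. measure M ((a i - Bset (fst (f i)) (snd (f i))) \<union> (Bset (fst (f i)) (snd (f i)) - a i)) < \<eta>'"
      by blast
    define mf where "mf i = fst (f i)" for i
    define Sf where "Sf i = snd (f i)" for i
    define D where "D i = (a i - Bset (mf i) (Sf i)) \<union> (Bset (mf i) (Sf i) - a i)" for i
    have Dm: "measure M (D i) < \<eta>'" for i using f[of i] by (simp add: D_def mf_def Sf_def)
    have Dmeas: "D i \<in> sets M" for i using ameas Bset_meas by (auto simp: D_def)
    define mm where "mm = (\<Sum>i<N. mf i)"
    have mle: "i < N \<Longrightarrow> mf i \<le> mm" for i
      unfolding mm_def by (rule member_le_sum) auto
    define S' where "S' = {p. \<exists>i<N. take (Suc (mf i)) p \<in> Sf i}"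
    have tp: "\<And>i \<omega>. i < N \<Longrightarrow> take (Suc (mf i)) (pre mm \<omega>) = pre (mf i) \<omega>"
      using mle take_pre by blast
    have BS: "Bset mm S' = (\<Union>i<N. Bset (mf i) (Sf i))"
      by (auto simp: Bset_def S'_def tp)
    have sub: "((\<Union>i. a i) - Bset mm S') \<union> (Bset mm S' - (\<Union>i. a i)) \<subseteq> ((\<Union>i. a i) - A' N) \<union> (\<Union>i<N. D i)"
      unfolding BS A'_def D_def by blast
    have "measure M (((\<Union>i. a i) - Bset mm S') \<union> (Bset mm S' - (\<Union>i. a i)))
        \<le> measure M (((\<Union>i. a i) - A' N) \<union> (\<Union>i<N. D i))"
      by (rule finite_measure_mono[OF sub]) (use Umeas A'meas Dmeas in auto)
    also have "\<dots> \<le> measure M ((\<Union>i. a i) - A' N) + measure M (\<Union>i<N. D i)"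
      by (rule measure_Un_le) (use Umeas A'meas Dmeas in auto)
    also have "measure M (\<Union>i<N. D i) \<le> (\<Sum>i<N. measure M (D i))"
      by (rule finite_measure_subadditive_finite) (use Dmeas in auto)
    also have "(\<Sum>i<N. measure M (D i)) \<le> (\<Sum>i<N. \<eta>')"
      by (rule sum_mono) (use Dm in \<open>auto intro: less_imp_le\<close>)
    also have "(\<Sum>i<N. \<eta>') = N * \<eta>'" by simp
    also have "N * \<eta>' \<le> \<eta> / 2"
      using eta by (simp add: \<eta>'_def field_simps)
    finally have "measure M (((\<Union>i. a i) - Bset mm S') \<union> (Bset mm S' - (\<Union>i. a i))) < \<eta>"
      using d1 by linarith
    then show "\<exists>m S. measure M (((\<Union>i. a i) - Bset m S) \<union> (Bset m S - (\<Union>i. a i))) < \<eta>" by blast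
  qed
  then show ?case using Umeas by auto
qed

end



context errw_setup begin

definition Aset :: "'a set" where
  "Aset = {\<omega> \<in> space M. \<forall>i<4. infinite {n. {I n \<omega>, I (Suc n) \<omega>} = cyc_edge i}}"

definition Ee :: "nat \<Rightarrow> nat \<Rightarrow> 'a set" where
  "Ee i n = Bset (Suc n) {p. {p ! n, p ! Suc n} = cyc_edge i}"

lemma Ee_iff: "\<omega> \<in> Ee i n \<longleftrightarrow> \<omega> \<in> space M \<and> {I n \<omega>, I (Suc n) \<omega>} = cyc_edge i"
  by (simp add: Ee_def Bset_def nth_pre)

lemma Aset_eq: "Aset = (\<Inter>i. \<Inter>N. if i < 4 then (\<Union>n. Ee i (N + n)) else space M)"
proof (intro set_eqI iffI)
  fix \<omega> assume "\<omega> \<in> Aset"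
  then have sp: "\<omega> \<in> space M" and inf: "\<And>i. i < 4 \<Longrightarrow> infinite {n. {I n \<omega>, I (Suc n) \<omega>} = cyc_edge i}"
    by (auto simp: Aset_def)
  show "\<omega> \<in> (\<Inter>i. \<Inter>N. if i < 4 then (\<Union>n. Ee i (N + n)) else space M)"
  proof (clarsimp simp: sp)
    fix i N :: nat assume "i < 4"
    then obtain n where "n \<ge> N" "{I n \<omega>, I (Suc n) \<omega>} = cyc_edge i"
      using inf[of i] unfolding infinite_nat_iff_unbounded_le by blast
    then show "\<exists>x. \<omega> \<in> Ee i (N + x)" using sp
      by (intro exI[of _ "n - N"]) (simp add: Ee_iff)
  qed
next
  fix \<omega> assume H: "\<omega> \<in> (\<Inter>i. \<Inter>N. if i < 4 then (\<Union>n. Ee i (N + n)) else space M)"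
  have H': "\<And>i N. \<omega> \<in> (if i < 4 then (\<Union>n. Ee i (N + n)) else space M)" using H by blast
  have sp: "\<omega> \<in> space M" using H'[of 4 0] by simp
  have "infinite {n. {I n \<omega>, I (Suc n) \<omega>} = cyc_edge i}" if i: "i < 4" for i
    unfolding infinite_nat_iff_unbounded_le
  proof
    fix N
    from H'[of i N] i obtain n where "\<omega> \<in> Ee i (N + n)" by auto
    then show "\<exists>n\<ge>N. n \<in> {n. {I n \<omega>, I (Suc n) \<omega>} = cyc_edge i}"
      by (intro exI[of _ "N + n"]) (simp add: Ee_iff)
  qed
  then show "\<omega> \<in> Aset" using sp by (simp add: Aset_def)
qed

lemma Aset_sigma: "Aset \<in> sigma_sets (space M) Gen"
  unfolding Aset_eq
proof (intro sigma_sets_Inter[OF Gen_sub])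
  fix i N :: nat
  show "(if i < 4 then (\<Union>n. Ee i (N + n)) else space M) \<in> sigma_sets (space M) Gen"
  proof (cases "i < 4")
    case True
    have "Ee i (N + n) \<in> sigma_sets (space M) Gen" for n
      by (rule sigma_sets.Basic) (auto simp: Gen_def Ee_def)
    then have "(\<Union>n. Ee i (N + n)) \<in> sigma_sets (space M) Gen" by (rule sigma_sets.Union)
    then show ?thesis using True by simp
  next
    case False then show ?thesis by (simp add: sigma_sets_top)
  qed
qed

lemma Aset_meas: "Aset \<in> sets M" and Aset_approx: "approx Aset"
  using sigma_approx[OF Aset_sigma] by auto

lemma ecount_pre: "ecount X0 (pre n \<omega>) e = X0 e + card {k. k < n \<and> {I k \<omega>, I (Suc k) \<omega>} = cyc_edge e}"
proof -
  have "{k. Suc k < length (pre n \<omega>) \<and> {pre n \<omega> ! k, pre n \<omega> ! Suc k} = cyc_edge e}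
      = {k. k < n \<and> {I k \<omega>, I (Suc k) \<omega>} = cyc_edge e}"
  proof (intro Collect_cong)
    fix k
    show "(Suc k < length (pre n \<omega>) \<and> {pre n \<omega> ! k, pre n \<omega> ! Suc k} = cyc_edge e)
        = (k < n \<and> {I k \<omega>, I (Suc k) \<omega>} = cyc_edge e)"
    proof (cases "k < n")
      case True
      then have "pre n \<omega> ! k = I k \<omega>" "pre n \<omega> ! Suc k = I (Suc k) \<omega>" by (simp_all add: nth_pre)
      then show ?thesis using True by simp
    next
      case False then show ?thesis by simp
    qed
  qed
  then show ?thesis by (simp add: ecount_def)
qed

lemma card_lim:
  fixes T :: "nat set" assumes "infinite T"
  shows "filterlim (\<lambda>n. c + card {k. k < n \<and> k \<in> T}) at_top sequentially"
  unfolding filterlim_at_top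
proof
  fix Z :: nat
  obtain F where F: "finite F" "card F = Z" "F \<subseteq> T" using infinite_arbitrarily_large[OF assms] by blast
  have "Z \<le> c + card {k. k < n \<and> k \<in> T}" if n: "n \<ge> Suc (\<Sum>F)" for n
  proof -
    have "F \<subseteq> {k. k < n \<and> k \<in> T}"
    proof
      fix k assume "k \<in> F"
      then have "k \<le> \<Sum>F" using F(1) member_le_sum[of k F "\<lambda>x. x"] by simp
      then show "k \<in> {k. k < n \<and> k \<in> T}" using n F(3) \<open>k \<in> F\<close> by auto
    qed
    then have "card F \<le> card {k. k < n \<and> k \<in> T}" by (rule card_mono[rotated]) auto
    then show ?thesis using F(2) by simp
  qed
  then show "\<forall>\<^sub>F n in sequentially. Z \<le> c + card {k. k < n \<and> k \<in> T}"
    unfolding eventually_sequentially by blast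
qed

definition Gc :: "real \<Rightarrow> complex" where
  "Gc \<theta> = (\<Prod>e<4. Le W X0 \<theta> e)"

lemma norm_Gc: "norm (Gc \<theta>) = Gm W X0 \<theta>"
  by (simp add: Gc_def Gm_def prod_norm)

lemma Mf_lim:
  assumes "\<omega> \<in> Aset"
  shows "(\<lambda>n. Mf W X0 \<theta> (pre n \<omega>)) \<longlonglongrightarrow> Gc \<theta>"
proof -
  have "(\<lambda>n. Pp W X0 \<theta> e (ecount X0 (pre n \<omega>) e)) \<longlonglongrightarrow> Le W X0 \<theta> e" if e: "e \<in> {..<4}" for e
  proof -
    have inf: "infinite {n. {I n \<omega>, I (Suc n) \<omega>} = cyc_edge e}" using assms e by (auto simp: Aset_def)
    have "filterlim (\<lambda>n. ecount X0 (pre n \<omega>) e) at_top sequentially"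
      unfolding ecount_pre using card_lim[OF inf, of "X0 e"] by simp
    then show ?thesis by (rule filterlim_compose[OF Pp_lim[OF Wpos sm]])
  qed
  then show ?thesis unfolding Mf_def Gc_def by (rule tendsto_prod)
qed

end



context errw_setup begin

lemma Mn_meas: "(\<lambda>\<omega>. Mf W X0 \<theta> (pre n \<omega>)) \<in> borel_measurable M"
  by (rule measurable_compose[OF pre_meas]) simp

lemma ind_c: "(indicator A \<omega> :: complex) = complex_of_real (indicator A \<omega>)"
  by (simp add: indicator_def)

lemma indMn_meas: "A \<in> sets M \<Longrightarrow> (\<lambda>\<omega>. (indicator A \<omega> :: complex) * Mf W X0 \<theta> (pre n \<omega>)) \<in> borel_measurable M"
  by (intro borel_measurable_times borel_measurable_indicator Mn_meas)

lemma norm_indMn: "norm ((indicator A \<omega> :: complex) * Mf W X0 \<theta> (pre n \<omega>)) \<le> Gm W X0 \<theta>"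
proof -
  have "norm ((indicator A \<omega> :: complex) * Mf W X0 \<theta> (pre n \<omega>)) = indicator A \<omega> * norm (Mf W X0 \<theta> (pre n \<omega>))"
    by (simp add: indicator_def)
  also have "\<dots> \<le> 1 * Gm W X0 \<theta>"
    by (intro mult_mono norm_Mf_le[OF Wpos sm]) (auto simp: indicator_def)
  finally show ?thesis by simp
qed

lemma indMn_int: "A \<in> sets M \<Longrightarrow> integrable M (\<lambda>\<omega>. (indicator A \<omega> :: complex) * Mf W X0 \<theta> (pre n \<omega>))"
proof (rule integrable_const_bound[where B="Gm W X0 \<theta>"])
  assume A: "A \<in> sets M"
  show "AE \<omega> in M. norm ((indicator A \<omega> :: complex) * Mf W X0 \<theta> (pre n \<omega>)) \<le> Gm W X0 \<theta>"
    using norm_indMn by simp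
  show "(\<lambda>\<omega>. (indicator A \<omega> :: complex) * Mf W X0 \<theta> (pre n \<omega>)) \<in> borel_measurable M"
    using A by (rule indMn_meas)
qed

lemma diff_bound:
  assumes A: "A \<in> sets M" and B: "B \<in> sets M"
  shows "norm ((\<integral>\<omega>. (indicator A \<omega> :: complex) * Mf W X0 \<theta> (pre k \<omega>) \<partial>M)
               - (\<integral>\<omega>. (indicator B \<omega> :: complex) * Mf W X0 \<theta> (pre k \<omega>) \<partial>M))
         \<le> Gm W X0 \<theta> * measure M ((A - B) \<union> (B - A))"
proof -
  let ?D = "(A - B) \<union> (B - A)"
  have D: "?D \<in> sets M" using A B by auto
  have eq: "(\<integral>\<omega>. (indicator A \<omega> :: complex) * Mf W X0 \<theta> (pre k \<omega>) \<partial>M)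
        - (\<integral>\<omega>. (indicator B \<omega> :: complex) * Mf W X0 \<theta> (pre k \<omega>) \<partial>M)
      = (\<integral>\<omega>. (indicator A \<omega> :: complex) * Mf W X0 \<theta> (pre k \<omega>) - (indicator B \<omega> :: complex) * Mf W X0 \<theta> (pre k \<omega>) \<partial>M)"
    by (rule Bochner_Integration.integral_diff[symmetric]) (auto intro: indMn_int A B)
  have "norm ((\<integral>\<omega>. (indicator A \<omega> :: complex) * Mf W X0 \<theta> (pre k \<omega>) - (indicator B \<omega> :: complex) * Mf W X0 \<theta> (pre k \<omega>) \<partial>M)) \<le> (\<integral>\<omega>. norm ((indicator A \<omega> :: complex) * Mf W X0 \<theta> (pre k \<omega>) - (indicator B \<omega> :: complex) * Mf W X0 \<theta> (pre k \<omega>)) \<partial>M)"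
    by (rule integral_norm_bound)
  also have "\<dots> \<le> (\<integral>\<omega>. indicator ?D \<omega> * Gm W X0 \<theta> \<partial>M)"
  proof (rule integral_mono)
    show "integrable M (\<lambda>\<omega>. norm ((indicator A \<omega> :: complex) * Mf W X0 \<theta> (pre k \<omega>) - (indicator B \<omega> :: complex) * Mf W X0 \<theta> (pre k \<omega>)))"
      by (intro integrable_norm Bochner_Integration.integrable_diff indMn_int A B)
    show "integrable M (\<lambda>\<omega>. indicator ?D \<omega> * Gm W X0 \<theta>)"
      using D by (intro integrable_mult_left integrable_real_indicator) (auto simp: emeasure_eq_measure)
    fix \<omega> assume "\<omega> \<in> space M"
    have "norm ((indicator A \<omega> :: complex) * Mf W X0 \<theta> (pre k \<omega>) - (indicator B \<omega> :: complex) * Mf W X0 \<theta> (pre k \<omega>))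
        = norm ((indicator A \<omega> :: complex) - indicator B \<omega>) * norm (Mf W X0 \<theta> (pre k \<omega>))"
      by (simp add: left_diff_distrib[symmetric] norm_mult)
    also have "norm ((indicator A \<omega> :: complex) - indicator B \<omega>) = indicator ?D \<omega>"
      by (cases "\<omega> \<in> A"; cases "\<omega> \<in> B") simp_all
    finally show "norm ((indicator A \<omega> :: complex) * Mf W X0 \<theta> (pre k \<omega>) - (indicator B \<omega> :: complex) * Mf W X0 \<theta> (pre k \<omega>))
        \<le> indicator ?D \<omega> * Gm W X0 \<theta>"
      using norm_Mf_le[OF Wpos sm] by (simp add: mult_left_mono)
  qed
  also have "\<dots> = measure M ?D * Gm W X0 \<theta>"
    using D sets.sets_into_space[OF D] by (simp add: Int_absorb2)
  finally show ?thesis unfolding eq by (simp add: mult.commute)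
qed


lemma int_ind_c: "A \<in> sets M \<Longrightarrow> (\<integral>\<omega>. (indicator A \<omega> :: complex) * c \<partial>M) = complex_of_real (measure M A) * c"
proof -
  assume A: "A \<in> sets M"
  have "(\<integral>\<omega>. (indicator A \<omega> :: complex) * c \<partial>M) = (\<integral>\<omega>. (indicator A \<omega> :: complex) \<partial>M) * c"
    by (rule integral_mult_left_zero)
  also have "(\<integral>\<omega>. (indicator A \<omega> :: complex) \<partial>M) = (\<integral>\<omega>. complex_of_real (indicator A \<omega>) \<partial>M)"
    by (simp only: ind_c)
  also have "\<dots> = complex_of_real (measure M A)"
    using A sets.sets_into_space[OF A] by (simp add: Int_absorb2)
  finally show ?thesis .
qed

lemma lim_L: "(\<lambda>n. \<integral>\<omega>. (indicator Aset \<omega> :: complex) * Mf W X0 \<theta> (pre n \<omega>) \<partial>M)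
     \<longlonglongrightarrow> complex_of_real (measure M Aset) * Gc \<theta>"
proof -
  have "(\<lambda>n. \<integral>\<omega>. (indicator Aset \<omega> :: complex) * Mf W X0 \<theta> (pre n \<omega>) \<partial>M)
     \<longlonglongrightarrow> (\<integral>\<omega>. (indicator Aset \<omega> :: complex) * Gc \<theta> \<partial>M)"
  proof (rule integral_dominated_convergence[where w="\<lambda>_. Gm W X0 \<theta>"])
    show "(\<lambda>\<omega>. (indicator Aset \<omega> :: complex) * Gc \<theta>) \<in> borel_measurable M"
      using Aset_meas by (intro borel_measurable_times borel_measurable_indicator) auto
    show "(\<lambda>\<omega>. (indicator Aset \<omega> :: complex) * Mf W X0 \<theta> (pre n \<omega>)) \<in> borel_measurable M" for n
      using Aset_meas by (rule indMn_meas)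
    show "integrable M (\<lambda>_. Gm W X0 \<theta>)" by simp
    show "AE \<omega> in M. (\<lambda>n. (indicator Aset \<omega> :: complex) * Mf W X0 \<theta> (pre n \<omega>)) \<longlonglongrightarrow> (indicator Aset \<omega> :: complex) * Gc \<theta>"
    proof (rule AE_I2)
      fix \<omega> assume "\<omega> \<in> space M"
      show "(\<lambda>n. (indicator Aset \<omega> :: complex) * Mf W X0 \<theta> (pre n \<omega>)) \<longlonglongrightarrow> (indicator Aset \<omega> :: complex) * Gc \<theta>"
      proof (cases "\<omega> \<in> Aset")
        case True then show ?thesis using Mf_lim[OF True] by simp
      next
        case False then show ?thesis by simp
      qed
    qed
    show "AE \<omega> in M. norm ((indicator Aset \<omega> :: complex) * Mf W X0 \<theta> (pre n \<omega>)) \<le> Gm W X0 \<theta>" for n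
      using norm_indMn by simp
  qed
  then show ?thesis by (simp only: int_ind_c[OF Aset_meas])
qed

lemma main_bound:
  shows "measure M Aset \<le> (\<integral>\<omega>. indicator Aset \<omega> * (norm (Mf W X0 \<theta> (pre m \<omega>)) / Gm W X0 \<theta>) \<partial>M)
          + 2 * measure M ((Aset - Bset m S) \<union> (Bset m S - Aset))"
proof -
  define Gv where "Gv = Gm W X0 \<theta>"
  define \<delta> where "\<delta> = measure M ((Aset - Bset m S) \<union> (Bset m S - Aset))"
  define L where "L n = (\<integral>\<omega>. (indicator Aset \<omega> :: complex) * Mf W X0 \<theta> (pre n \<omega>) \<partial>M)" for n
  define LB where "LB n = (\<integral>\<omega>. (indicator (Bset m S) \<omega> :: complex) * Mf W X0 \<theta> (pre n \<omega>) \<partial>M)" for n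
  define P where "P = measure M Aset"
  have Gv1: "Gv \<ge> 1" unfolding Gv_def by (rule Gm_ge1[OF Wpos sm])
  have d1: "norm (L n - LB n) \<le> Gv * \<delta>" for n
    unfolding L_def LB_def Gv_def \<delta>_def by (rule diff_bound[OF Aset_meas Bset_meas])
  have d2: "norm (LB n - L n) \<le> Gv * \<delta>" for n
  proof -
    have "norm (LB n - L n) \<le> Gv * measure M ((Bset m S - Aset) \<union> (Aset - Bset m S))"
      unfolding L_def LB_def Gv_def by (rule diff_bound[OF Bset_meas Aset_meas])
    then show ?thesis by (simp add: \<delta>_def Un_commute)
  qed
  have mart_eq: "LB n = LB m" if "m \<le> n" for n
    unfolding LB_def by (rule mart_int[OF that])
  have ev: "\<forall>\<^sub>F n in sequentially. norm (L n - L m) \<le> 2 * Gv * \<delta>"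
    unfolding eventually_sequentially
  proof (intro exI allI impI)
    fix n assume "m \<le> n"
    have e: "L n - L m = (L n - LB n) + (LB m - L m)" using mart_eq[OF \<open>m \<le> n\<close>] by simp
    have "norm (L n - L m) \<le> norm (L n - LB n) + norm (LB m - L m)"
      unfolding e by (rule norm_triangle_ineq)
    then show "norm (L n - L m) \<le> 2 * Gv * \<delta>" using d1[of n] d2[of m] by simp
  qed
  have limL: "L \<longlonglongrightarrow> complex_of_real P * Gc \<theta>" unfolding L_def P_def by (rule lim_L)
  have "(\<lambda>n. norm (L n - L m)) \<longlonglongrightarrow> norm (complex_of_real P * Gc \<theta> - L m)"
    by (intro tendsto_norm tendsto_diff limL tendsto_const)
  then have lim_le: "norm (complex_of_real P * Gc \<theta> - L m) \<le> 2 * Gv * \<delta>"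
    using ev by (rule tendsto_upperbound) simp
  have P0: "P \<ge> 0" by (simp add: P_def)
  have nP: "norm (complex_of_real P * Gc \<theta>) = Gv * P"
    using P0 by (simp add: norm_mult norm_Gc Gv_def)
  have tri: "norm (complex_of_real P * Gc \<theta>) \<le> norm (complex_of_real P * Gc \<theta> - L m) + norm (L m)"
    using norm_triangle_sub[of "complex_of_real P * Gc \<theta>" "L m"] by linarith
  have nLm: "norm (L m) \<le> (\<integral>\<omega>. norm ((indicator Aset \<omega> :: complex) * Mf W X0 \<theta> (pre m \<omega>)) \<partial>M)"
    unfolding L_def by (rule integral_norm_bound)
  have eqI: "(\<integral>\<omega>. norm ((indicator Aset \<omega> :: complex) * Mf W X0 \<theta> (pre m \<omega>)) \<partial>M)
      = (\<integral>\<omega>. indicator Aset \<omega> * (norm (Mf W X0 \<theta> (pre m \<omega>)) / Gv) * Gv \<partial>M)"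
  proof (rule Bochner_Integration.integral_cong[OF refl])
    fix \<omega> show "norm ((indicator Aset \<omega> :: complex) * Mf W X0 \<theta> (pre m \<omega>))
        = indicator Aset \<omega> * (norm (Mf W X0 \<theta> (pre m \<omega>)) / Gv) * Gv"
      using Gv1 by (simp add: indicator_def)
  qed
  have eqI2: "(\<integral>\<omega>. indicator Aset \<omega> * (norm (Mf W X0 \<theta> (pre m \<omega>)) / Gv) * Gv \<partial>M)
      = (\<integral>\<omega>. indicator Aset \<omega> * (norm (Mf W X0 \<theta> (pre m \<omega>)) / Gv) \<partial>M) * Gv"
    by (rule integral_mult_left_zero)
  define J where "J = (\<integral>\<omega>. indicator Aset \<omega> * (norm (Mf W X0 \<theta> (pre m \<omega>)) / Gv) \<partial>M)"
  have "Gv * P \<le> 2 * Gv * \<delta> + J * Gv"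
    using nP tri lim_le nLm eqI eqI2 unfolding J_def by linarith
  then have "Gv * P \<le> Gv * (J + 2 * \<delta>)" by (simp add: algebra_simps)
  then have "P \<le> J + 2 * \<delta>" using Gv1 by simp
  then show ?thesis by (simp add: P_def J_def Gv_def \<delta>_def)
qed


lemma h_upper:
  assumes j: "j > 0"
  shows "indicator Aset \<omega> * (norm (Mf W X0 (real j) (pre m \<omega>)) / Gm W X0 (real j))
         \<le> W (ecount X0 (pre m \<omega>) 0) / real j"
proof -
  define c where "c = ecount X0 (pre m \<omega>) 0"
  define nM where "nM = norm (Mf W X0 (real j) (pre m \<omega>))"
  define G where "G = Gm W X0 (real j)"
  define nz where "nz = norm (wfac W X0 (real j) 0 c)"
  have G1: "G \<ge> 1" unfolding G_def by (rule Gm_ge1[OF Wpos sm])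
  have Wc: "W c > 0" by (rule Wpos)
  have wz: "wfac W X0 (real j) 0 c = zf W (real j) 0 c" by (simp add: wfac_def c_def ecount_ge)
  have nz_ge: "nz \<ge> real j / W c" unfolding nz_def wz using norm_zf_ge[of W c "real j" 0, OF Wc] by simp
  have pos: "real j / W c > 0" using j Wc by simp
  have nzpos: "nz > 0" using nz_ge pos by linarith
  have prodle: "nM * nz \<le> G" unfolding nM_def nz_def G_def c_def by (rule norm_Mf_le2[OF Wpos sm])
  have "nM \<le> G / nz" using prodle nzpos by (simp add: pos_le_divide_eq)
  then have "nM / G \<le> (G / nz) / G" using G1 by (intro divide_right_mono) auto
  also have "\<dots> = 1 / nz" using G1 by simp
  also have "\<dots> \<le> 1 / (real j / W c)" by (rule divide_left_mono) (use nz_ge pos mult_pos_pos[OF nzpos pos] in auto)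
  also have "\<dots> = W c / real j" by simp
  finally have main: "nM / G \<le> W c / real j" .
  have nn: "nM / G \<ge> 0" using G1 by (simp add: nM_def)
  have "indicator Aset \<omega> * (nM / G) \<le> 1 * (nM / G)"
    using nn by (intro mult_right_mono) (auto simp: indicator_def)
  then show ?thesis using main by (simp add: nM_def G_def c_def)
qed

lemma h_bounds:
  shows "0 \<le> indicator Aset \<omega> * (norm (Mf W X0 \<theta> (pre m \<omega>)) / Gm W X0 \<theta>)"
    and "indicator Aset \<omega> * (norm (Mf W X0 \<theta> (pre m \<omega>)) / Gm W X0 \<theta>) \<le> 1"
proof -
  have G1: "Gm W X0 \<theta> \<ge> 1" by (rule Gm_ge1[OF Wpos sm])
  have a: "norm (Mf W X0 \<theta> (pre m \<omega>)) / Gm W X0 \<theta> \<le> 1"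
    using norm_Mf_le[OF Wpos sm, of X0 \<theta> "pre m \<omega>"] G1 by simp
  have b: "norm (Mf W X0 \<theta> (pre m \<omega>)) / Gm W X0 \<theta> \<ge> 0" using G1 by simp
  show "0 \<le> indicator Aset \<omega> * (norm (Mf W X0 \<theta> (pre m \<omega>)) / Gm W X0 \<theta>)"
    using b by (simp add: indicator_def)
  show "indicator Aset \<omega> * (norm (Mf W X0 \<theta> (pre m \<omega>)) / Gm W X0 \<theta>) \<le> 1"
    using a by (simp add: indicator_def)
qed

lemma Aset_null: "measure M Aset = 0"
proof -
  have key: "measure M Aset \<le> 2 * \<eta>" if eta: "\<eta> > 0" for \<eta>
  proof -
    obtain m S where ms: "measure M ((Aset - Bset m S) \<union> (Bset m S - Aset)) < \<eta>"
      using Aset_approx eta unfolding approx_def by blast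
    define \<delta> where "\<delta> = measure M ((Aset - Bset m S) \<union> (Bset m S - Aset))"
    define h where "h j \<omega> = indicator Aset \<omega> * (norm (Mf W X0 (real j) (pre m \<omega>)) / Gm W X0 (real j))" for j \<omega>
    have bnd: "measure M Aset \<le> (\<integral>\<omega>. h j \<omega> \<partial>M) + 2 * \<delta>" for j
      unfolding h_def \<delta>_def by (rule main_bound)
    have "(\<lambda>j. \<integral>\<omega>. h j \<omega> \<partial>M) \<longlonglongrightarrow> (\<integral>\<omega>. 0 \<partial>M)"
    proof (rule integral_dominated_convergence[where w="\<lambda>_. 1"])
      show "(\<lambda>\<omega>. 0::real) \<in> borel_measurable M" by simp
      show "h j \<in> borel_measurable M" for j
        unfolding h_def using Aset_meas
        by (intro borel_measurable_times borel_measurable_indicator borel_measurable_divide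
              measurable_compose[OF Mn_meas borel_measurable_norm] borel_measurable_const)
      show "integrable M (\<lambda>_. 1::real)" by simp
      show "AE \<omega> in M. (\<lambda>j. h j \<omega>) \<longlonglongrightarrow> 0"
      proof (rule AE_I2)
        fix \<omega>
        show "(\<lambda>j. h j \<omega>) \<longlonglongrightarrow> 0"
        proof (rule tendsto_sandwich[where f="\<lambda>_. 0" and h="\<lambda>j. W (ecount X0 (pre m \<omega>) 0) / real j"])
          show "\<forall>\<^sub>F j in sequentially. 0 \<le> h j \<omega>" unfolding h_def using h_bounds(1) by simp
          show "\<forall>\<^sub>F j in sequentially. h j \<omega> \<le> W (ecount X0 (pre m \<omega>) 0) / real j"
            unfolding eventually_sequentially h_def using h_upper
            by (intro exI[of _ 1]) auto
          show "((\<lambda>_. 0) \<longlongrightarrow> (0::real)) sequentially" by simp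
          show "(\<lambda>j. W (ecount X0 (pre m \<omega>) 0) / real j) \<longlonglongrightarrow> 0" by (rule lim_const_over_n)
        qed
      qed
      show "AE \<omega> in M. norm (h j \<omega>) \<le> 1" for j
      proof (rule AE_I2)
        fix \<omega>
        have "0 \<le> h j \<omega>" "h j \<omega> \<le> 1" unfolding h_def by (rule h_bounds)+
        then show "norm (h j \<omega>) \<le> 1" by simp
      qed
    qed
    then have "(\<lambda>j. (\<integral>\<omega>. h j \<omega> \<partial>M) + 2 * \<delta>) \<longlonglongrightarrow> 0 + 2 * \<delta>"
      by (intro tendsto_add tendsto_const) simp
    then have "measure M Aset \<le> 0 + 2 * \<delta>"
      by (rule tendsto_lowerbound) (use bnd in simp_all)
    then show ?thesis using ms by (simp add: \<delta>_def)
  qed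
  have "measure M Aset \<le> 0"
  proof (rule ccontr)
    assume "\<not> measure M Aset \<le> 0"
    then have p: "measure M Aset > 0" by simp
    have "measure M Aset \<le> 2 * (measure M Aset / 4)" using key[of "measure M Aset / 4"] p by simp
    then show False using p by simp
  qed
  then show ?thesis using measure_nonneg[of M Aset] by linarith
qed

end


theorem proposition3:
  fixes M :: "'a measure" and I :: "nat \<Rightarrow> 'a \<Rightarrow> nat"
    and W :: "nat \<Rightarrow> real" and X0 :: "nat \<Rightarrow> nat" and v0 :: nat
  assumes "prob_space M"
    and "\<And>k. W k > 0"
    and "summable (\<lambda>k. 1 / W k)"
    and "v0 < 4"
    and "\<And>n. I n \<in> measurable M (count_space UNIV)"
    and "\<And>p. p \<noteq> [] \<Longrightarrow>
           measure M {\<omega> \<in> space M. \<forall>k<length p. I k \<omega> = p ! k} = errw_path_prob W X0 v0 p"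
  shows "measure M {\<omega> \<in> space M. \<forall>i<4. infinite {n. {I n \<omega>, I (Suc n) \<omega>} = cyc_edge i}} = 0"
proof -
  interpret errw_setup M I W X0 v0
    by (rule errw_setup.intro[OF assms])
  have "measure M Aset = 0" by (rule Aset_null)
  then show ?thesis unfolding Aset_def .
qed

end
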